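(* Let $\vartheta$ be a semi-compatible random substitution on $\mathcal A=\{a_1,\dots,a_n\}$ with substitution matrix $M$. Then for all integers $1\leqslant k<m$, \[ \bm q_k^\intercal M^{m-k}\;\leqslant\;\bm q_m^\intercal\;\leqslant\;\bm q_k^\intercal M^{m-k}+\bm q_{m-k}^\intercal \] component-wise.
   Context: Let $\mathcal A=\{a_1,\dots,a_n\}$ be a finite alphabet, $\mathcal A^+$ the set of finite non-empty words over $\mathcal A$, and $\mathcal F(\mathcal A^+)$ the set of finite non-empty subsets of $\mathcal A^+$. For $A,B\in\mathcal F(\mathcal A^+)$ put $AB=\{uv: u\in A, v\in B\}$. A random substitution is a map $\vartheta:\mathcal A\to\mathcal F(\mathcal A^+)$, extended to words by $\vartheta(u_1\cdots u_m)=\vartheta(u_1)\cdots\vartheta(u_m)$ and to sets by $\vartheta(A)=\bigcup_{u\in A}\vartheta(u)$; powers $\vartheta^m$ are compositions. $|u|_a$ denotes the number of occurrences of the letter $a$ in $u$ and $\Phi(u)=(|u|_{a_1},\dots,|u|_{a_n})^\intercal$. $\vartheta$ is semi-compatible if for every $a\in\mathcal A$ all words in $\vartheta(a)$ have the same Abelianisation $\Phi$. The substitution matrix is $M_{ij}=|u|_{a_i}$ for any $u\in\vartheta(a_j)$. Set $q_{m,i}=\log(\#\vartheta^m(a_i))$ and $\bm q_m=(q_{m,1},\dots,q_{m,n})^\intercal$. *)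

theory Defs
  imports "HOL-Analysis.Analysis"
begin

definition random_substitution :: "('a \<Rightarrow> 'a list set) \<Rightarrow> bool" where
  "random_substitution \<theta> \<longleftrightarrow> (\<forall>a. finite (\<theta> a) \<and> \<theta> a \<noteq> {} \<and> [] \<notin> \<theta> a)"

fun subst_word :: "('a \<Rightarrow> 'a list set) \<Rightarrow> 'a list \<Rightarrow> 'a list set" where
  "subst_word \<theta> [] = {[]}"
| "subst_word \<theta> (x # xs) = {u @ v | u v. u \<in> \<theta> x \<and> v \<in> subst_word \<theta> xs}"

definition subst_set :: "('a \<Rightarrow> 'a list set) \<Rightarrow> 'a list set \<Rightarrow> 'a list set" where
  "subst_set \<theta> A = (\<Union>u\<in>A. subst_word \<theta> u)"

fun subst_pow :: "('a \<Rightarrow> 'a list set) \<Rightarrow> nat \<Rightarrow> 'a list set \<Rightarrow> 'a list set" where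
  "subst_pow \<theta> 0 A = A"
| "subst_pow \<theta> (Suc m) A = subst_set \<theta> (subst_pow \<theta> m A)"

definition semi_compatible :: "('a \<Rightarrow> 'a list set) \<Rightarrow> bool" where
  "semi_compatible \<theta> \<longleftrightarrow>
     (\<forall>a. \<forall>u\<in>\<theta> a. \<forall>v\<in>\<theta> a. \<forall>b. count_list u b = count_list v b)"

definition subst_matrix :: "('a::finite \<Rightarrow> 'a list set) \<Rightarrow> real^'a^'a" where
  "subst_matrix \<theta> = (\<chi> i j. real (count_list (SOME u. u \<in> \<theta> j) i))"

fun mat_pow :: "real^'n^'n \<Rightarrow> nat \<Rightarrow> real^'n^'n" where
  "mat_pow A 0 = mat 1"
| "mat_pow A (Suc k) = mat_pow A k ** A"

definition qvec :: "('a::finite \<Rightarrow> 'a list set) \<Rightarrow> nat \<Rightarrow> real^'a" where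
  "qvec \<theta> m = (\<chi> i. ln (real (card (subst_pow \<theta> m {[i]}))))"

end

theory Submission
  imports Defs
begin

definition cat :: "'a list set \<Rightarrow> 'a list set \<Rightarrow> 'a list set" where
  "cat A B = (\<lambda>(a,b). a @ b) ` (A \<times> B)"

lemma subst_word_Cons': "subst_word \<theta> (x # xs) = cat (\<theta> x) (subst_word \<theta> xs)"
  unfolding cat_def by auto

declare subst_word.simps(2)[simp del]

lemma cat_Nil: "cat {[]} B = B"
  unfolding cat_def by (auto simp: image_iff)

lemma cat_assoc: "cat (cat A B) C = cat A (cat B C)"
  unfolding cat_def by (auto simp: image_iff; blast)

lemma subst_word_append: "subst_word \<theta> (xs @ ys) = cat (subst_word \<theta> xs) (subst_word \<theta> ys)"
  by (induction xs) (simp_all add: cat_Nil subst_word_Cons' cat_assoc)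

lemma subst_set_cat: "subst_set \<theta> (cat A B) = cat (subst_set \<theta> A) (subst_set \<theta> B)"
  unfolding subst_set_def cat_def by (auto simp: subst_word_append cat_def image_iff; blast)

lemma subst_pow_cat: "subst_pow \<theta> k (cat A B) = cat (subst_pow \<theta> k A) (subst_pow \<theta> k B)"
  by (induction k) (simp_all add: subst_set_cat)

lemma subst_pow_add: "subst_pow \<theta> (a + b) A = subst_pow \<theta> a (subst_pow \<theta> b A)"
  by (induction a) simp_all

lemma subst_set_UN: "subst_set \<theta> (\<Union>i\<in>I. B i) = (\<Union>i\<in>I. subst_set \<theta> (B i))"
  unfolding subst_set_def by blast

lemma subst_pow_UN: "subst_pow \<theta> l A = (\<Union>x\<in>A. subst_pow \<theta> l {x})"
proof (induction l arbitrary: A)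
  case 0 then show ?case by simp
next
  case (Suc l)
  have "subst_pow \<theta> (Suc l) A = subst_set \<theta> (\<Union>x\<in>A. subst_pow \<theta> l {x})"
    using Suc[of A] by simp
  then show ?case by (simp add: subst_set_UN)
qed

lemma subst_pow_Suc': "subst_pow \<theta> (Suc l) A = subst_pow \<theta> l (subst_set \<theta> A)"
  using subst_pow_add[of \<theta> l 1 A] by simp

lemma subst_pow_Nil: "subst_pow \<theta> l {[]} = {[]}"
  by (induction l) (simp_all add: subst_set_def)

lemma finite_cat: "finite A \<Longrightarrow> finite B \<Longrightarrow> finite (cat A B)"
  unfolding cat_def by simp

lemma cat_nonempty: "A \<noteq> {} \<Longrightarrow> B \<noteq> {} \<Longrightarrow> cat A B \<noteq> {}"
  unfolding cat_def by auto

lemma fin_word: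
  assumes "random_substitution \<theta>"
  shows "finite (subst_word \<theta> u) \<and> subst_word \<theta> u \<noteq> {}"
proof (induction u)
  case Nil then show ?case by simp
next
  case (Cons a u)
  have "finite (\<theta> a)" "\<theta> a \<noteq> {}" using assms unfolding random_substitution_def by auto
  moreover have "finite (subst_word \<theta> u)" "subst_word \<theta> u \<noteq> {}" using Cons by auto
  ultimately have "finite (cat (\<theta> a) (subst_word \<theta> u))" "cat (\<theta> a) (subst_word \<theta> u) \<noteq> {}"
    by (simp_all add: finite_cat cat_nonempty)
  then show ?case unfolding subst_word_Cons' by simp
qed

lemma fin_set:
  assumes "random_substitution \<theta>" "finite A" "A \<noteq> {}"
  shows "finite (subst_set \<theta> A) \<and> subst_set \<theta> A \<noteq> {}"
proof -
  have "finite (subst_set \<theta> A)" unfolding subst_set_def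
    by (rule finite_UN_I) (use assms fin_word[OF assms(1)] in auto)
  moreover obtain x where "x \<in> A" using assms by blast
  then have "subst_word \<theta> x \<subseteq> subst_set \<theta> A" unfolding subst_set_def by blast
  then have "subst_set \<theta> A \<noteq> {}" using fin_word[OF assms(1), of x] by blast
  ultimately show ?thesis by blast
qed

lemma fin_pow:
  assumes "random_substitution \<theta>" "finite A" "A \<noteq> {}"
  shows "finite (subst_pow \<theta> l A) \<and> subst_pow \<theta> l A \<noteq> {}"
proof (induction l)
  case 0 then show ?case using assms by simp
next
  case (Suc l)
  from Suc have "finite (subst_pow \<theta> l A)" "subst_pow \<theta> l A \<noteq> {}" by auto
  from fin_set[OF assms(1) this] show ?case by simp
qed

lemma M_entry: "subst_matrix \<theta> $ i $ c = real (count_list (SOME v. v \<in> \<theta> c) i)"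
  by (simp add: subst_matrix_def)

lemma count_Cons_real: "real (count_list (a # u) c) = (if a = c then 1 else 0) + real (count_list u c)"
  by simp

lemma count_one_step:
  assumes rs: "random_substitution \<theta>" and sc: "semi_compatible \<theta>"
  shows "u' \<in> subst_word \<theta> u \<Longrightarrow>
    real (count_list u' i) = (\<Sum>c\<in>UNIV. real (count_list u c) * subst_matrix \<theta> $ i $ c)"
proof (induction u arbitrary: u')
  case Nil then show ?case by simp
next
  case (Cons a u)
  from Cons.prems obtain x y where xy: "u' = x @ y" "x \<in> \<theta> a" "y \<in> subst_word \<theta> u"
    unfolding subst_word_Cons' cat_def by auto
  have "\<theta> a \<noteq> {}" using rs unfolding random_substitution_def by auto
  then have "(SOME v. v \<in> \<theta> a) \<in> \<theta> a" by (simp add: some_in_eq)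
  then have cx: "real (count_list x i) = subst_matrix \<theta> $ i $ a"
    using sc xy(2) unfolding semi_compatible_def M_entry by metis
  have "real (count_list u' i) = subst_matrix \<theta> $ i $ a + real (count_list y i)"
    using xy(1) cx by simp
  also have "real (count_list y i) = (\<Sum>c\<in>UNIV. real (count_list u c) * subst_matrix \<theta> $ i $ c)"
    using Cons.IH xy(3) by blast
  also have "subst_matrix \<theta> $ i $ a + (\<Sum>c\<in>UNIV. real (count_list u c) * subst_matrix \<theta> $ i $ c)
     = (\<Sum>c\<in>UNIV. ((if a = c then 1 else 0) + real (count_list u c)) * subst_matrix \<theta> $ i $ c)"
    by (simp add: distrib_right sum.distrib if_distrib[of "\<lambda>z. z * _"] cong: if_cong)
  also have "\<dots> = (\<Sum>c\<in>UNIV. real (count_list (a # u) c) * subst_matrix \<theta> $ i $ c)"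
    by (simp only: count_Cons_real)
  finally show ?case .
qed

lemma count_pow:
  assumes rs: "random_substitution \<theta>" and sc: "semi_compatible \<theta>"
  shows "w \<in> subst_pow \<theta> l {u} \<Longrightarrow>
    real (count_list w i) = (\<Sum>c\<in>UNIV. real (count_list u c) * mat_pow (subst_matrix \<theta>) l $ i $ c)"
proof (induction l arbitrary: u w i)
  case 0 then show ?case by (simp add: mat_def if_distrib[of "\<lambda>z. _ * z"] cong: if_cong)
next
  case (Suc l)
  let ?M = "subst_matrix \<theta>" and ?P = "mat_pow (subst_matrix \<theta>) l"
  have "subst_pow \<theta> (Suc l) {u} = (\<Union>x\<in>subst_word \<theta> u. subst_pow \<theta> l {x})"
    by (simp only: subst_pow_Suc' subst_pow_UN[of \<theta> l "subst_set \<theta> {u}"]) (simp add: subst_set_def)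
  with Suc.prems obtain u' where u': "u' \<in> subst_word \<theta> u" "w \<in> subst_pow \<theta> l {u'}" by auto
  have "real (count_list w i) = (\<Sum>c\<in>UNIV. real (count_list u' c) * ?P $ i $ c)"
    using Suc.IH u'(2) by blast
  also have "\<dots> = (\<Sum>c\<in>UNIV. (\<Sum>d\<in>UNIV. real (count_list u d) * ?M $ c $ d) * ?P $ i $ c)"
    using count_one_step[OF rs sc u'(1)] by simp
  also have "\<dots> = (\<Sum>c\<in>UNIV. \<Sum>d\<in>UNIV. real (count_list u d) * (?P $ i $ c * ?M $ c $ d))"
    by (rule sum.cong[OF refl]) (simp add: sum_distrib_left sum_distrib_right mult_ac)
  also have "\<dots> = (\<Sum>d\<in>UNIV. \<Sum>c\<in>UNIV. real (count_list u d) * (?P $ i $ c * ?M $ c $ d))"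
    by (rule sum.swap)
  also have "\<dots> = (\<Sum>d\<in>UNIV. real (count_list u d) * (\<Sum>c\<in>UNIV. ?P $ i $ c * ?M $ c $ d))"
    by (simp add: sum_distrib_left)
  also have "\<dots> = (\<Sum>d\<in>UNIV. real (count_list u d) * mat_pow ?M (Suc l) $ i $ d)"
    by (simp add: matrix_matrix_mult_def)
  finally show ?case .
qed

lemma length_pow:
  assumes rs: "random_substitution \<theta>" and sc: "semi_compatible \<theta>"
    and "w \<in> subst_pow \<theta> l {u}" "w' \<in> subst_pow \<theta> l {u}"
  shows "length w = length (w' :: 'a::finite list)"
proof -
  have "\<And>i. real (count_list w i) = real (count_list w' i)"
    using count_pow[OF rs sc assms(3)] count_pow[OF rs sc assms(4)] by simp
  then have "\<And>i. count_list w i = count_list w' i" by simp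
  then have "sum (count_list w) UNIV = sum (count_list w') UNIV" by simp
  then show ?thesis using sum_count_set[of w UNIV] sum_count_set[of w' UNIV] by simp
qed

lemma card_cat:
  assumes "finite A" "finite B" "\<forall>a\<in>A. \<forall>a'\<in>A. length a = length a'"
  shows "card (cat A B) = card A * card B"
proof -
  have "inj_on (\<lambda>(a,b). a @ b) (A \<times> B)"
  proof (rule inj_onI)
    fix x y assume x: "x \<in> A \<times> B" and y: "y \<in> A \<times> B"
      and e: "(\<lambda>(a,b). a @ b) x = (\<lambda>(a,b). a @ b) y"
    obtain a b where ab: "x = (a, b)" by (cases x)
    obtain a' b' where ab': "y = (a', b')" by (cases y)
    have "a \<in> A" "a' \<in> A" using x y ab ab' by auto
    then have l: "length a = length a'" using assms(3) by blast
    have "a @ b = a' @ b'" using e ab ab' by simp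
    then have "a = a' \<and> b = b'" using l append_eq_append_conv by blast
    then show "x = y" using ab ab' by simp
  qed
  then show ?thesis unfolding cat_def by (simp add: card_image card_cartesian_product)
qed

lemma cat_single: "cat {x} {y} = {x @ y}"
  unfolding cat_def by simp

lemma ln_card_pow:
  assumes rs: "random_substitution \<theta>" and sc: "semi_compatible \<theta>"
  shows "ln (real (card (subst_pow \<theta> k {u}))) =
    (\<Sum>c\<in>UNIV. real (count_list u c) * ln (real (card (subst_pow \<theta> k {[c::'a::finite]}))))"
proof (induction u)
  case Nil then show ?case by (simp add: subst_pow_Nil)
next
  case (Cons a u)
  let ?S = "\<lambda>x. subst_pow \<theta> k {x}"
  have "{a # u} = cat {[a]} {u}" using cat_single[of "[a]" u] by simp
  then have eq: "?S (a # u) = cat (?S [a]) (?S u)" by (simp add: subst_pow_cat)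
  have fa: "finite (?S [a])" "?S [a] \<noteq> {}" using fin_pow[OF rs, of "{[a]}" k] by auto
  have fu: "finite (?S u)" "?S u \<noteq> {}" using fin_pow[OF rs, of "{u}" k] by auto
  have "card (?S (a # u)) = card (?S [a]) * card (?S u)"
    unfolding eq by (rule card_cat[OF fa(1) fu(1)]) (use length_pow[OF rs sc] in blast)
  moreover have "card (?S [a]) > 0" "card (?S u) > 0" using fa fu by (auto simp: card_gt_0_iff)
  ultimately have "ln (real (card (?S (a # u)))) = ln (real (card (?S [a]))) + ln (real (card (?S u)))"
    by (simp add: ln_mult)
  also have "\<dots> = (\<Sum>c\<in>UNIV. ((if a = c then 1 else 0) + real (count_list u c)) * ln (real (card (?S [c]))))"
    using Cons.IH by (simp add: distrib_right sum.distrib if_distrib[of "\<lambda>z. z * _"] cong: if_cong)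
  also have "\<dots> = (\<Sum>c\<in>UNIV. real (count_list (a # u) c) * ln (real (card (?S [c]))))"
    by (simp only: count_Cons_real)
  finally show ?case .
qed

lemma qvec_entry: "qvec \<theta> k $ i = ln (real (card (subst_pow \<theta> k {[i]})))"
  by (simp add: qvec_def)

theorem mainTheorem2:
  fixes \<theta> :: "'a::finite \<Rightarrow> 'a list set"
    and k m :: nat
  assumes "random_substitution \<theta>"
    and "semi_compatible \<theta>"
    and "1 \<le> k" and "k < m"
  shows "\<forall>j. (qvec \<theta> k v* mat_pow (subst_matrix \<theta>) (m - k)) $ j \<le> qvec \<theta> m $ j
           \<and> qvec \<theta> m $ j \<le> (qvec \<theta> k v* mat_pow (subst_matrix \<theta>) (m - k)) $ j + qvec \<theta> (m - k) $ j"
proof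
  fix j
  note rs = assms(1) and sc = assms(2)
  let ?P = "mat_pow (subst_matrix \<theta>) (m - k)"
  let ?V = "subst_pow \<theta> (m - k) {[j]}"
  let ?S = "\<lambda>x. subst_pow \<theta> k {x}"
  define L where "L = (qvec \<theta> k v* ?P) $ j"
  have L: "L = (\<Sum>c\<in>UNIV. ?P $ c $ j * ln (real (card (?S [c]))))"
    unfolding L_def by (simp add: vector_matrix_mult_def qvec_entry mult_ac)
  have V: "finite ?V" "?V \<noteq> {}" using fin_pow[OF rs, of "{[j]}" "m - k"] by auto
  have lnS: "ln (real (card (?S v))) = L" if "v \<in> ?V" for v
  proof -
    have cnt: "real (count_list v c) = ?P $ c $ j" for c
    proof -
      have "(\<Sum>ca\<in>UNIV. real (count_list [j] ca) * ?P $ c $ ca) = (\<Sum>ca\<in>UNIV. if ca = j then ?P $ c $ j else 0)"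
        by (rule sum.cong) auto
      also have "\<dots> = ?P $ c $ j" by simp
      finally show ?thesis using count_pow[OF rs sc that, of c] by simp
    qed
    have "ln (real (card (?S v))) = (\<Sum>c\<in>UNIV. real (count_list v c) * ln (real (card (?S [c]))))"
      by (rule ln_card_pow[OF rs sc])
    also have "\<dots> = (\<Sum>c\<in>UNIV. ?P $ c $ j * ln (real (card (?S [c]))))"
      by (rule sum.cong) (simp_all only: cnt)
    also have "\<dots> = L" using L by simp
    finally show ?thesis .
  qed
  have Spos: "finite (?S v)" "card (?S v) > 0" for v
    using fin_pow[OF rs, of "{v}" k] by (auto simp: card_gt_0_iff)
  have cardS: "real (card (?S v)) = exp L" if "v \<in> ?V" for v
    using lnS[OF that] Spos[of v] by (metis exp_ln of_nat_0_less_iff)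
  have "m = k + (m - k)" using assms(4) by simp
  then have eqm: "subst_pow \<theta> m {[j]} = (\<Union>v\<in>?V. ?S v)"
    by (metis subst_pow_add subst_pow_UN)
  have finU: "finite (\<Union>v\<in>?V. ?S v)" using V Spos by blast
  obtain v0 where v0: "v0 \<in> ?V" using V by blast
  have "card (?S v0) \<le> card (\<Union>v\<in>?V. ?S v)"
    by (rule card_mono[OF finU]) (use v0 in blast)
  then have "real (card (?S v0)) \<le> real (card (\<Union>v\<in>?V. ?S v))" by (simp only: of_nat_le_iff)
  moreover have "real (card (?S v0)) > 0" using Spos(2)[of v0] by simp
  ultimately have "ln (real (card (?S v0))) \<le> ln (real (card (\<Union>v\<in>?V. ?S v)))"
    by (rule ln_mono)
  then have low: "L \<le> qvec \<theta> m $ j"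
    unfolding qvec_entry eqm lnS[OF v0] .
  have "card (\<Union>v\<in>?V. ?S v) \<le> (\<Sum>v\<in>?V. card (?S v))" by (rule card_UN_le[OF V(1)])
  then have "real (card (\<Union>v\<in>?V. ?S v)) \<le> real (\<Sum>v\<in>?V. card (?S v))" by (simp only: of_nat_le_iff)
  also have "\<dots> = (\<Sum>v\<in>?V. real (card (?S v)))" by (rule of_nat_sum)
  also have "\<dots> = (\<Sum>v\<in>?V. exp L)" by (rule sum.cong) (simp_all add: cardS)
  also have "\<dots> = real (card ?V) * exp L" by simp
  finally have up1: "real (card (\<Union>v\<in>?V. ?S v)) \<le> real (card ?V) * exp L" .
  have cU: "card (\<Union>v\<in>?V. ?S v) > 0" using \<open>card (?S v0) \<le> _\<close> Spos[of v0] by linarith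
  have cV: "card ?V > 0" using V by (simp add: card_gt_0_iff)
  have "0 < real (card (\<Union>v\<in>?V. ?S v))" using cU by (simp only: of_nat_0_less_iff)
  from ln_mono[OF up1 this]
  have up2: "qvec \<theta> m $ j \<le> ln (real (card ?V) * exp L)"
    by (simp only: qvec_entry eqm)
  have "ln (real (card ?V) * exp L) = ln (real (card ?V)) + ln (exp L)"
    by (rule ln_mult_pos) (use cV in auto)
  also have "\<dots> = qvec \<theta> (m - k) $ j + L" by (simp only: qvec_entry ln_exp)
  finally have up3: "qvec \<theta> m $ j \<le> qvec \<theta> (m - k) $ j + L" using up2 by linarith
  have Leq: "L = (qvec \<theta> k v* ?P) $ j" by (rule L_def)
  show "(qvec \<theta> k v* ?P) $ j \<le> qvec \<theta> m $ j
           \<and> qvec \<theta> m $ j \<le> (qvec \<theta> k v* ?P) $ j + qvec \<theta> (m - k) $ j"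
    using low up3 Leq by linarith
qed

end
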